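(* Let $A\in\mathrm{GL}(n,2)$ have columns $\mathbf{a}_1,\dots,\mathbf{a}_n$, let $\rho$ be an $n$-qubit state, $\varepsilon>0$, $\delta\in(0,1)$. For each $i$, measure $g(\mathbf{a}_i)$ on $m_i$ independent copies of $\rho$, recording outcomes $Y_{i,j}\in\{0,1\}$ ($1$ for outcome $+1$, $0$ for $-1$), all mutually independent, and set $\widehat a_i=\frac1{m_i}\sum_j Y_{i,j}$ and $\widehat U_A=\min_i\widehat a_i$. If $m_i\ge\lceil \log(2n/\delta)/(2\varepsilon^2)\rceil$ for every $i$, then with probability at least $1-\delta$, $$F(\rho,\psi)\le\widehat U_A+\varepsilon.$$ In particular, taking $m_i=\lceil \log(2n/\delta)/(2\varepsilon^2)\rceil$ for all $i$, this certificate uses a total of $M_u=n\lceil \log(2n/\delta)/(2\varepsilon^2)\rceil$ copies of $\rho$.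
   Context: Setting: $|\psi\rangle$ is an $n$-qubit stabilizer state whose stabilizer group is generated by independent commuting Pauli operators $g_1,\dots,g_n$; for $\mathbf{u}\in\mathbb{F}_2^n$, $g(\mathbf{u})=\prod_j g_j^{u_j}$. $F(\rho,\psi)=\langle\psi|\rho|\psi\rangle$ is the fidelity. $\mathrm{GL}(n,2)$ is the group of invertible binary $n\times n$ matrices. $\log$ is the natural logarithm. *)

theory Defs
  imports "HOL-Probability.Probability" "HOL-Library.Z2" "Jordan_Normal_Form.Matrix"
begin

datatype pauli1 = PI | PX | PY | PZ

text \<open>Entry (r,c) of a single-qubit Pauli matrix; rows/columns indexed by bits
  (False = basis state 0, True = basis state 1).\<close>
fun pauli1_entry :: "pauli1 \<Rightarrow> bool \<Rightarrow> bool \<Rightarrow> complex" where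
  "pauli1_entry PI r c = (if r = c then 1 else 0)"
| "pauli1_entry PX r c = (if r \<noteq> c then 1 else 0)"
| "pauli1_entry PY r c = (if r = c then 0 else if r then \<i> else - \<i>)"
| "pauli1_entry PZ r c = (if r \<noteq> c then 0 else if r then -1 else 1)"

text \<open>The 2^n x 2^n matrix of the Pauli operator ph * P_0 (x) ... (x) P_(n-1),
  the k-th bit of a basis index being the state of qubit k (tensor product written entrywise).\<close>
definition pauli_mat :: "nat \<Rightarrow> complex \<Rightarrow> (nat \<Rightarrow> pauli1) \<Rightarrow> complex mat" where
  "pauli_mat n ph P = mat (2^n) (2^n)
     (\<lambda>(r, c). ph * (\<Prod>k<n. pauli1_entry (P k) (odd (r div 2^k)) (odd (c div 2^k))))"

definition is_pauli :: "nat \<Rightarrow> complex mat \<Rightarrow> bool" where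
  "is_pauli n G \<longleftrightarrow> (\<exists>ph P. ph \<in> {1, -1, \<i>, -\<i>} \<and> G = pauli_mat n ph P)"

fun gen_prod :: "nat \<Rightarrow> (nat \<Rightarrow> complex mat) \<Rightarrow> bit vec \<Rightarrow> nat \<Rightarrow> complex mat" where
  "gen_prod N g u 0 = 1\<^sub>m N"
| "gen_prod N g u (Suc j) = gen_prod N g u j * (if u $ j = 1 then g j else 1\<^sub>m N)"

definition g_of :: "nat \<Rightarrow> (nat \<Rightarrow> complex mat) \<Rightarrow> bit vec \<Rightarrow> complex mat" where
  "g_of n g u = gen_prod (2^n) g u n"

definition stabilizer_state :: "nat \<Rightarrow> (nat \<Rightarrow> complex mat) \<Rightarrow> complex vec \<Rightarrow> bool" where
  "stabilizer_state n g \<psi> \<longleftrightarrow>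
     \<psi> \<in> carrier_vec (2^n) \<and> \<psi> \<bullet>c \<psi> = 1 \<and>
     (\<forall>j<n. is_pauli n (g j)) \<and>
     (\<forall>j<n. \<forall>k<n. g j * g k = g k * g j) \<and>
     (\<forall>u \<in> carrier_vec n. u \<noteq> 0\<^sub>v n \<longrightarrow> g_of n g u \<noteq> 1\<^sub>m (2^n)) \<and>
     (\<forall>j<n. g j *\<^sub>v \<psi> = \<psi>)"

definition mtrace :: "complex mat \<Rightarrow> complex" where
  "mtrace M = (\<Sum>i<dim_row M. M $$ (i, i))"

definition density_matrix :: "nat \<Rightarrow> complex mat \<Rightarrow> bool" where
  "density_matrix n \<rho> \<longleftrightarrow> \<rho> \<in> carrier_mat (2^n) (2^n) \<and> mtrace \<rho> = 1 \<and>
     (\<forall>v \<in> carrier_vec (2^n). 0 \<le> (\<rho> *\<^sub>v v) \<bullet>c v)"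

definition fidelity :: "complex mat \<Rightarrow> complex vec \<Rightarrow> real" where
  "fidelity \<rho> \<psi> = Re ((\<rho> *\<^sub>v \<psi>) \<bullet>c \<psi>)"

text \<open>Born-rule probability of outcome +1 when measuring the Pauli observable G on rho:
  tr(rho (I + G)/2).\<close>
definition plus_prob :: "nat \<Rightarrow> complex mat \<Rightarrow> complex mat \<Rightarrow> real" where
  "plus_prob n \<rho> G = Re (mtrace (\<rho> * ((1/2) \<cdot>\<^sub>m (1\<^sub>m (2^n) + G))))"

text \<open>Joint law of the mutually independent outcomes Y(i,j) (True = outcome +1),
  i < n, j < m i, where Y(i,j) comes from measuring g(a_i) on a fresh copy of rho.\<close>
definition outcomes :: "nat \<Rightarrow> bit mat \<Rightarrow> (nat \<Rightarrow> complex mat) \<Rightarrow> complex mat \<Rightarrow> (nat \<Rightarrow> nat)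
    \<Rightarrow> (nat \<times> nat \<Rightarrow> bool) pmf" where
  "outcomes n A g \<rho> m = Pi_pmf {(i, j). i < n \<and> j < m i} False
     (\<lambda>(i, j). bernoulli_pmf (plus_prob n \<rho> (g_of n g (col A i))))"

definition a_hat :: "(nat \<Rightarrow> nat) \<Rightarrow> (nat \<times> nat \<Rightarrow> bool) \<Rightarrow> nat \<Rightarrow> real" where
  "a_hat m Y i = (\<Sum>j<m i. of_bool (Y (i, j))) / real (m i)"

definition U_hat :: "nat \<Rightarrow> (nat \<Rightarrow> nat) \<Rightarrow> (nat \<times> nat \<Rightarrow> bool) \<Rightarrow> real" where
  "U_hat n m Y = Min (a_hat m Y ` {..<n})"

end

theory Submission
  imports Defs
begin


lemma sum_prod_bits:
  fixes f :: "nat \<Rightarrow> bool \<Rightarrow> 'a::comm_semiring_1"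
  shows "(\<Sum>s<(2::nat)^n. \<Prod>k<n. f k (odd (s div 2^k))) = (\<Prod>k<n. f k False + f k True)"
proof (induction n)
  case 0 then show ?case by simp
next
  case (Suc n)
  have split: "{..<(2::nat)^Suc n} = {..<2^n} \<union> (\<lambda>s. s + 2^n) ` {..<2^n}" 
  proof -
    have "{..<(2::nat)^Suc n} = {..<2^n} \<union> {2^n..<2^n+2^n}" by auto
    moreover have "{(2::nat)^n..<2^n+2^n} = (\<lambda>s. s + 2^n) ` {..<2^n}"
    proof (intro equalityI subsetI)
      fix x :: nat assume "x \<in> {2^n..<2^n+2^n}"
      then show "x \<in> (\<lambda>s. s + 2^n) ` {..<2^n}"
        by (intro image_eqI[where x="x - 2^n"]) auto
    qed auto
    ultimately show ?thesis by simp
  qed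
  have disj: "{..<(2::nat)^n} \<inter> (\<lambda>s. s + 2^n) ` {..<2^n} = {}" by auto
  have lo: "odd (s div 2^n) = False" if "s < 2^n" for s :: nat using that by simp
  have hi1: "odd ((s + 2^n) div 2^n) = True" if "s < 2^n" for s :: nat
    using that by simp
  have hi2: "odd ((s + 2^n) div 2^k) = odd (s div 2^k)" if "k < n" for s k :: nat
  proof -
    have "(2::nat)^n = 2^k * 2^(n-k)" using that by (simp add: power_add[symmetric])
    hence "(s + 2^n) div 2^k = s div 2^k + 2^(n-k)" by simp
    moreover have "even ((2::nat)^(n-k))" using that by simp
    ultimately show ?thesis by simp
  qed
  have "(\<Sum>s<(2::nat)^Suc n. \<Prod>k<Suc n. f k (odd (s div 2^k)))
      = (\<Sum>s<(2::nat)^n. \<Prod>k<Suc n. f k (odd (s div 2^k))) + (\<Sum>s<(2::nat)^n. \<Prod>k<Suc n. f k (odd ((s+2^n) div 2^k)))"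
    unfolding split by (subst sum.union_disjoint) (auto simp: sum.reindex inj_on_def)
  also have "(\<Sum>s<(2::nat)^n. \<Prod>k<Suc n. f k (odd (s div 2^k))) = (\<Sum>s<(2::nat)^n. \<Prod>k<n. f k (odd (s div 2^k))) * f n False"
    by (simp add: sum_distrib_right lo)
  also have "(\<Sum>s<(2::nat)^n. \<Prod>k<Suc n. f k (odd ((s+2^n) div 2^k))) = (\<Sum>s<(2::nat)^n. \<Prod>k<n. f k (odd (s div 2^k))) * f n True"
    by (simp add: sum_distrib_right hi1 hi2 del: power_Suc)
  also have "(\<Sum>s<(2::nat)^n. \<Prod>k<n. f k (odd (s div 2^k))) * f n False + (\<Sum>s<(2::nat)^n. \<Prod>k<n. f k (odd (s div 2^k))) * f n True
     = (\<Prod>k<n. f k False + f k True) * (f n False + f n True)"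
    unfolding Suc.IH by (simp only: distrib_left)
  finally show ?case by (simp only: prod.lessThan_Suc)
qed

lemma bits_eq_imp_eq:
  fixes r c :: nat
  assumes "r < 2^n" "c < 2^n" "\<forall>k<n. odd (r div 2^k) = odd (c div 2^k)"
  shows "r = c"
proof -
  have "bit r k = bit c k" for k
  proof (cases "k < n")
    case True then show ?thesis using assms(3) by (simp add: bit_iff_odd)
  next
    case False
    hence "(2::nat)^n \<le> 2^k" by simp
    hence "r div 2^k = 0" "c div 2^k = 0" using assms(1,2) by (meson div_less less_le_trans)+
    then show ?thesis by (simp add: bit_iff_odd)
  qed
  then show ?thesis by (simp add: bit_eq_iff)
qed

lemma pauli1_sq: "pauli1_entry p r False * pauli1_entry p False c + pauli1_entry p r True * pauli1_entry p True c = of_bool (r = c)"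
  by (cases p; cases r; cases c) auto

lemma pauli1_herm: "pauli1_entry p c r = cnj (pauli1_entry p r c)"
  by (cases p; cases r; cases c) auto

lemma prod_of_bool_bits:
  fixes r c :: nat
  assumes "r < 2^n" "c < 2^n"
  shows "(\<Prod>k<n. (of_bool (odd (r div 2^k) = odd (c div 2^k)) :: complex)) = of_bool (r = c)"
proof (cases "r = c")
  case True then show ?thesis by simp
next
  case False
  then obtain k where "k < n" "odd (r div 2^k) \<noteq> odd (c div 2^k)" using bits_eq_imp_eq[OF assms] by blast
  hence "(\<Prod>k<n. (of_bool (odd (r div 2^k) = odd (c div 2^k)) :: complex)) = 0"
    by (intro prod_zero) (auto intro!: bexI[where x=k])
  then show ?thesis using False by simp
qed

lemma pauli_carrier: "pauli_mat n ph P \<in> carrier_mat (2^n) (2^n)"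
  by (simp add: pauli_mat_def)

lemma pauli_entry: "r < 2^n \<Longrightarrow> c < 2^n \<Longrightarrow> pauli_mat n ph P $$ (r, c) = ph * (\<Prod>k<n. pauli1_entry (P k) (odd (r div 2^k)) (odd (c div 2^k)))"
  by (simp add: pauli_mat_def)

lemma pauli_dims[simp]: "dim_row (pauli_mat n ph P) = 2^n" "dim_col (pauli_mat n ph P) = 2^n"
  by (simp_all add: pauli_mat_def)

lemma mult_entry_sum: "A \<in> carrier_mat N N \<Longrightarrow> B \<in> carrier_mat N N \<Longrightarrow> r < N \<Longrightarrow> c < N \<Longrightarrow>
   (A * B) $$ (r, c) = (\<Sum>s<N. A $$ (r, s) * B $$ (s, c))"
  by (simp add: scalar_prod_def atLeast0LessThan)

lemma pauli_sq: "pauli_mat n 1 P * pauli_mat n 1 P = 1\<^sub>m (2^n)"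
proof (rule eq_matI)
  fix r c assume rc: "r < dim_row (1\<^sub>m (2^n) :: complex mat)" "c < dim_col (1\<^sub>m (2^n) :: complex mat)"
  hence r: "r < 2^n" and c: "c < 2^n" by auto
  have "(pauli_mat n 1 P * pauli_mat n 1 P) $$ (r, c)
      = (\<Sum>s<(2::nat)^n. pauli_mat n 1 P $$ (r, s) * pauli_mat n 1 P $$ (s, c))"
    using r c by (intro mult_entry_sum pauli_carrier)
  also have "\<dots> = (\<Sum>s<(2::nat)^n. \<Prod>k<n. pauli1_entry (P k) (odd (r div 2^k)) (odd (s div 2^k)) * pauli1_entry (P k) (odd (s div 2^k)) (odd (c div 2^k)))"
    by (intro sum.cong refl) (simp only: pauli_entry r c lessThan_iff mult_1 prod.distrib)
  also have "\<dots> = (\<Prod>k<n. pauli1_entry (P k) (odd (r div 2^k)) False * pauli1_entry (P k) False (odd (c div 2^k))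
        + pauli1_entry (P k) (odd (r div 2^k)) True * pauli1_entry (P k) True (odd (c div 2^k)))"
    by (rule sum_prod_bits)
  also have "\<dots> = (\<Prod>k<n. of_bool (odd (r div 2^k) = odd (c div 2^k)))"
    by (simp only: pauli1_sq)
  also have "\<dots> = of_bool (r = c)" using prod_of_bool_bits[OF r c] .
  finally show "(pauli_mat n 1 P * pauli_mat n 1 P) $$ (r, c) = 1\<^sub>m (2^n) $$ (r, c)" using r c by simp
qed auto

lemma pauli_herm: "r < 2^n \<Longrightarrow> c < 2^n \<Longrightarrow> pauli_mat n 1 P $$ (c, r) = cnj (pauli_mat n 1 P $$ (r, c))"
  by (simp only: pauli_entry mult_1 cnj_prod) (rule prod.cong, rule refl, rule pauli1_herm)

lemma pauli_smult: "pauli_mat n ph P = ph \<cdot>\<^sub>m pauli_mat n 1 P"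
  by (rule eq_matI) (auto simp: pauli_mat_def)



definition herm_f :: "nat \<Rightarrow> (nat \<Rightarrow> nat \<Rightarrow> complex) \<Rightarrow> bool" where
  "herm_f N q \<longleftrightarrow> (\<forall>a<N. \<forall>b<N. q b a = cnj (q a b))"

definition idem_f :: "nat \<Rightarrow> (nat \<Rightarrow> nat \<Rightarrow> complex) \<Rightarrow> bool" where
  "idem_f N q \<longleftrightarrow> (\<forall>a<N. \<forall>b<N. (\<Sum>c<N. q a c * q c b) = q a b)"

lemma sum_delta_l: fixes a N :: nat assumes aN: "a < N" shows " (\<Sum>c<N. of_bool (a = c) * f c) = (f a :: complex)"
proof -
  have "(\<Sum>c<N. of_bool (a = c) * f c) = (\<Sum>c<N. if a = c then f c else 0)"
    by (intro sum.cong) auto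
  also have "\<dots> = f a" using aN by (subst sum.delta') auto
  finally show ?thesis .
qed

lemma sum_delta_r: fixes a N :: nat assumes aN: "a < N" shows " (\<Sum>c<N. f c * of_bool (c = a)) = (f a :: complex)"
proof -
  have "(\<Sum>c<N. f c * of_bool (c = a)) = (\<Sum>c<N. if a = c then f c else 0)"
    by (intro sum.cong) auto
  also have "\<dots> = f a" using aN by (subst sum.delta') auto
  finally show ?thesis .
qed

lemma trace_pos:
  assumes rho: "\<rho> \<in> carrier_mat N N" and psd: "\<forall>v \<in> carrier_vec N. 0 \<le> (\<rho> *\<^sub>v v) \<bullet>c v"
    and h: "herm_f N q" and i: "idem_f N q"
  shows "0 \<le> Re (\<Sum>k<N. \<Sum>a<N. \<rho> $$ (k, a) * q a k)"
proof -
  define v where "v c = vec N (\<lambda>a. q a c)" for c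
  have qq: "q a k = (\<Sum>c<N. q a c * cnj (q k c))" if "a < N" "k < N" for a k
  proof -
    have "(\<Sum>c<N. q a c * cnj (q k c)) = (\<Sum>c<N. q a c * q c k)"
    proof (intro sum.cong refl)
      fix c assume "c \<in> {..<N}"
      then have "q c k = cnj (q k c)" using h that unfolding herm_f_def by blast
      then show "q a c * cnj (q k c) = q a c * q c k" by simp
    qed
    also have "\<dots> = q a k" using i that unfolding idem_f_def by auto
    finally show ?thesis by simp
  qed
  have trm: "(\<rho> *\<^sub>v v c) \<bullet>c v c = (\<Sum>k<N. \<Sum>a<N. \<rho> $$ (k, a) * q a c * cnj (q k c))" for c
  proof -
    have "(\<rho> *\<^sub>v v c) \<bullet>c v c = (\<Sum>k<N. (\<Sum>a<N. \<rho> $$ (k, a) * q a c) * cnj (q k c))"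
      using rho by (simp add: v_def scalar_prod_def atLeast0LessThan)
    also have "\<dots> = (\<Sum>k<N. \<Sum>a<N. \<rho> $$ (k, a) * q a c * cnj (q k c))"
      by (simp only: sum_distrib_right)
    finally show ?thesis .
  qed
  have "(\<Sum>k<N. \<Sum>a<N. \<rho> $$ (k, a) * q a k) = (\<Sum>k<N. \<Sum>a<N. \<Sum>c<N. \<rho> $$ (k, a) * q a c * cnj (q k c))"
    apply (intro sum.cong refl)
    subgoal for k a
      by (subst qq[of a k]) (auto simp: sum_distrib_left mult.assoc)
    done
  also have "\<dots> = (\<Sum>k<N. \<Sum>c<N. \<Sum>a<N. \<rho> $$ (k, a) * q a c * cnj (q k c))"
    by (rule sum.cong[OF refl], rule sum.swap)
  also have "\<dots> = (\<Sum>c<N. \<Sum>k<N. \<Sum>a<N. \<rho> $$ (k, a) * q a c * cnj (q k c))"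
    by (rule sum.swap)
  also have "\<dots> = (\<Sum>c<N. (\<rho> *\<^sub>v v c) \<bullet>c v c)" by (simp add: trm)
  finally have eq: "(\<Sum>k<N. \<Sum>a<N. \<rho> $$ (k, a) * q a k) = (\<Sum>c<N. (\<rho> *\<^sub>v v c) \<bullet>c v c)" .
  have "0 \<le> (\<rho> *\<^sub>v v c) \<bullet>c v c" for c using psd by (simp add: v_def)
  hence "0 \<le> Re ((\<rho> *\<^sub>v v c) \<bullet>c v c)" for c by (simp add: less_eq_complex_def)
  thus ?thesis unfolding eq Re_sum by (intro sum_nonneg) auto
qed

lemma fid_bound:
  fixes gg :: "nat \<Rightarrow> nat \<Rightarrow> complex" and \<psi> :: "nat \<Rightarrow> complex"
  assumes rho: "\<rho> \<in> carrier_mat N N" and psd: "\<forall>v \<in> carrier_vec N. 0 \<le> (\<rho> *\<^sub>v v) \<bullet>c v"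
    and tr: "(\<Sum>k<N. \<rho> $$ (k, k)) = 1"
    and hG: "herm_f N gg" and sq: "\<forall>a<N. \<forall>b<N. (\<Sum>c<N. gg a c * gg c b) = of_bool (a = b)"
    and fx: "\<forall>a<N. (\<Sum>c<N. gg a c * \<psi> c) = \<psi> a"
    and nrm: "(\<Sum>c<N. \<psi> c * cnj (\<psi> c)) = 1"
  defines "p \<equiv> \<lambda>a b. (of_bool (a = b) + gg a b) / 2"
  shows "Re (\<Sum>k<N. \<Sum>a<N. \<rho> $$ (k, a) * (\<psi> a * cnj (\<psi> k))) \<le> Re (\<Sum>k<N. \<Sum>a<N. \<rho> $$ (k, a) * p a k)
       \<and> Re (\<Sum>k<N. \<Sum>a<N. \<rho> $$ (k, a) * p a k) \<le> 1"
proof -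
  have gh: "gg b a = cnj (gg a b)" if "a < N" "b < N" for a b using hG that unfolding herm_f_def by blast
  have phx: "p b a = cnj (p a b)" if "a < N" "b < N" for a b
    unfolding p_def using gh[OF that] by simp
  have ph: "herm_f N p" unfolding herm_f_def using phx by blast
  have pidem: "(\<Sum>c<N. p a c * p c b) = p a b" if ab: "a < N" "b < N" for a b
  proof -
    have "(\<Sum>c<N. p a c * p c b) = (\<Sum>c<N. (of_bool (a = c) * of_bool (c = b) + of_bool (a = c) * gg c b
            + gg a c * of_bool (c = b) + gg a c * gg c b) / 4)"
      unfolding p_def by (intro sum.cong refl) (simp add: algebra_simps)
    also have "\<dots> = ((\<Sum>c<N. of_bool (a = c) * of_bool (c = b)) + (\<Sum>c<N. of_bool (a = c) * gg c b)
            + (\<Sum>c<N. gg a c * of_bool (c = b)) + (\<Sum>c<N. gg a c * gg c b)) / 4"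
      by (simp only: sum_divide_distrib[symmetric] sum.distrib)
    also have "\<dots> = (of_bool (a = b) + gg a b + gg a b + of_bool (a = b)) / 4"
      using ab sq by (simp add: sum_delta_l[OF ab(1)] sum_delta_r[OF ab(2)])
    also have "\<dots> = p a b" unfolding p_def by (simp add: field_simps)
    finally show ?thesis .
  qed
  have pfix: "(\<Sum>c<N. p a c * \<psi> c) = \<psi> a" if "a < N" for a
  proof -
    have "(\<Sum>c<N. p a c * \<psi> c) = ((\<Sum>c<N. of_bool (a = c) * \<psi> c) + (\<Sum>c<N. gg a c * \<psi> c)) / 2"
    proof -
      have "(\<Sum>c<N. p a c * \<psi> c) = (\<Sum>c<N. (of_bool (a = c) * \<psi> c + gg a c * \<psi> c) / 2)"
        unfolding p_def by (intro sum.cong refl) (simp add: algebra_simps)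
      also have "\<dots> = ((\<Sum>c<N. of_bool (a = c) * \<psi> c) + (\<Sum>c<N. gg a c * \<psi> c)) / 2"
        by (simp only: sum_divide_distrib[symmetric] sum.distrib)
      finally show ?thesis .
    qed
    also have "\<dots> = \<psi> a" using that fx by (simp add: sum_delta_l)
    finally show ?thesis .
  qed
  have pfix2: "(\<Sum>c<N. cnj (\<psi> c) * p c b) = cnj (\<psi> b)" if "b < N" for b
  proof -
    have "(\<Sum>c<N. cnj (\<psi> c) * p c b) = (\<Sum>c<N. cnj (p b c * \<psi> c))"
    proof (intro sum.cong refl)
      fix c assume "c \<in> {..<N}"
      then show "cnj (\<psi> c) * p c b = cnj (p b c * \<psi> c)" using phx[of b c] that by simp
    qed
    also have "\<dots> = cnj (\<Sum>c<N. p b c * \<psi> c)" by simp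
    also have "\<dots> = cnj (\<psi> b)" using pfix[OF that] by simp
    finally show ?thesis .
  qed
  have nrm2: "(\<Sum>c<N. cnj (\<psi> c) * \<psi> c) = 1" using nrm by (simp add: mult.commute)
  define q1 where "q1 a b = p a b - \<psi> a * cnj (\<psi> b)" for a b
  define q2 where "q2 a b = of_bool (a = b) - p a b" for a b
  have h1: "herm_f N q1" unfolding herm_f_def
  proof (intro allI impI)
    fix a b assume "a < N" "b < N"
    then show "q1 b a = cnj (q1 a b)" unfolding q1_def using phx[of a b] by simp
  qed
  have h2: "herm_f N q2" unfolding herm_f_def
  proof (intro allI impI)
    fix a b assume "a < N" "b < N"
    then show "q2 b a = cnj (q2 a b)" unfolding q2_def using phx[of a b] by auto
  qed
  have i1: "idem_f N q1" unfolding idem_f_def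
  proof (intro allI impI)
    fix a b assume ab: "a < N" "b < N"
    have "(\<Sum>c<N. q1 a c * q1 c b) = (\<Sum>c<N. p a c * p c b) - cnj (\<psi> b) * (\<Sum>c<N. p a c * \<psi> c)
        - \<psi> a * (\<Sum>c<N. cnj (\<psi> c) * p c b) + \<psi> a * cnj (\<psi> b) * (\<Sum>c<N. cnj (\<psi> c) * \<psi> c)"
    proof -
      have "(\<Sum>c<N. q1 a c * q1 c b) = (\<Sum>c<N. p a c * p c b - cnj (\<psi> b) * (p a c * \<psi> c)
         - \<psi> a * (cnj (\<psi> c) * p c b) + \<psi> a * cnj (\<psi> b) * (cnj (\<psi> c) * \<psi> c))"
        unfolding q1_def by (intro sum.cong refl) (simp add: algebra_simps)
      also have "\<dots> = (\<Sum>c<N. p a c * p c b) - cnj (\<psi> b) * (\<Sum>c<N. p a c * \<psi> c)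
        - \<psi> a * (\<Sum>c<N. cnj (\<psi> c) * p c b) + \<psi> a * cnj (\<psi> b) * (\<Sum>c<N. cnj (\<psi> c) * \<psi> c)"
        by (simp only: sum.distrib sum_subtractf sum_distrib_left)
      finally show ?thesis .
    qed
    also have "\<dots> = q1 a b" unfolding q1_def using ab by (simp add: pidem pfix pfix2 nrm2)
    finally show "(\<Sum>c<N. q1 a c * q1 c b) = q1 a b" .
  qed
  have i2: "idem_f N q2" unfolding idem_f_def
  proof (intro allI impI)
    fix a b assume ab: "a < N" "b < N"
    have "(\<Sum>c<N. q2 a c * q2 c b) = (\<Sum>c<N. of_bool (a = c) * of_bool (c = b)) - (\<Sum>c<N. of_bool (a = c) * p c b)
        - (\<Sum>c<N. p a c * of_bool (c = b)) + (\<Sum>c<N. p a c * p c b)"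
    proof -
      have "(\<Sum>c<N. q2 a c * q2 c b) = (\<Sum>c<N. of_bool (a = c) * of_bool (c = b) - of_bool (a = c) * p c b
         - p a c * of_bool (c = b) + p a c * p c b)"
        unfolding q2_def by (intro sum.cong refl) (simp add: algebra_simps)
      also have "\<dots> = (\<Sum>c<N. of_bool (a = c) * of_bool (c = b)) - (\<Sum>c<N. of_bool (a = c) * p c b)
        - (\<Sum>c<N. p a c * of_bool (c = b)) + (\<Sum>c<N. p a c * p c b)"
        by (simp only: sum.distrib sum_subtractf)
      finally show ?thesis .
    qed
    also have "\<dots> = q2 a b" unfolding q2_def using ab by (simp add: pidem sum_delta_l[OF ab(1)] sum_delta_r[OF ab(2)])
    finally show "(\<Sum>c<N. q2 a c * q2 c b) = q2 a b" .
  qed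
  have t1: "0 \<le> Re (\<Sum>k<N. \<Sum>a<N. \<rho> $$ (k, a) * q1 a k)" by (rule trace_pos[OF rho psd h1 i1])
  have t2: "0 \<le> Re (\<Sum>k<N. \<Sum>a<N. \<rho> $$ (k, a) * q2 a k)" by (rule trace_pos[OF rho psd h2 i2])
  have e1: "(\<Sum>k<N. \<Sum>a<N. \<rho> $$ (k, a) * q1 a k) = (\<Sum>k<N. \<Sum>a<N. \<rho> $$ (k, a) * p a k)
      - (\<Sum>k<N. \<Sum>a<N. \<rho> $$ (k, a) * (\<psi> a * cnj (\<psi> k)))"
    unfolding q1_def by (simp only: sum_subtractf right_diff_distrib)
  have e2: "(\<Sum>k<N. \<Sum>a<N. \<rho> $$ (k, a) * q2 a k) = 1 - (\<Sum>k<N. \<Sum>a<N. \<rho> $$ (k, a) * p a k)"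
  proof -
    have "(\<Sum>k<N. \<Sum>a<N. \<rho> $$ (k, a) * q2 a k) = (\<Sum>k<N. \<Sum>a<N. \<rho> $$ (k, a) * of_bool (a = k))
      - (\<Sum>k<N. \<Sum>a<N. \<rho> $$ (k, a) * p a k)"
      unfolding q2_def by (simp only: sum_subtractf right_diff_distrib)
    also have "(\<Sum>k<N. \<Sum>a<N. \<rho> $$ (k, a) * of_bool (a = k)) = (\<Sum>k<N. \<rho> $$ (k, k))"
      by (intro sum.cong refl) (simp add: sum_delta_r)
    finally show ?thesis using tr by simp
  qed
  show ?thesis using t1 t2 unfolding e1 e2 by simp
qed



lemma herm_mult:
  assumes A: "A \<in> carrier_mat N N" and B: "B \<in> carrier_mat N N"
    and hA: "herm_f N (\<lambda>a b. A $$ (a, b))" and hB: "herm_f N (\<lambda>a b. B $$ (a, b))"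
    and comm: "A * B = B * A"
  shows "herm_f N (\<lambda>a b. (A * B) $$ (a, b))"
  unfolding herm_f_def
proof (intro allI impI)
  fix a b assume a: "a < N" and b: "b < N"
  have "cnj ((A * B) $$ (a, b)) = (\<Sum>c<N. cnj (A $$ (a, c)) * cnj (B $$ (c, b)))"
    using mult_entry_sum[OF A B a b] by simp
  also have "\<dots> = (\<Sum>c<N. B $$ (b, c) * A $$ (c, a))"
  proof (intro sum.cong refl)
    fix c assume "c \<in> {..<N}"
    hence c: "c < N" by simp
    have "A $$ (c, a) = cnj (A $$ (a, c))" using hA a c unfolding herm_f_def by blast
    moreover have "B $$ (b, c) = cnj (B $$ (c, b))" using hB b c unfolding herm_f_def by blast
    ultimately show "cnj (A $$ (a, c)) * cnj (B $$ (c, b)) = B $$ (b, c) * A $$ (c, a)" by simp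
  qed
  also have "\<dots> = (B * A) $$ (b, a)" using mult_entry_sum[OF B A b a] by simp
  finally show "(A * B) $$ (b, a) = cnj ((A * B) $$ (a, b))" using comm by simp
qed

lemma smult_one_mult_vec: "v \<in> carrier_vec N \<Longrightarrow> (c \<cdot>\<^sub>m 1\<^sub>m N) *\<^sub>v v = c \<cdot>\<^sub>v (v :: complex vec)"
proof -
  assume v: "v \<in> carrier_vec N"
  have "(\<Sum>ia = 0..<N. c * (if ia = i then 1 else 0) * v $ ia) = c * v $ i" if "i < N" for i
  proof -
    have "(\<Sum>ia = 0..<N. c * (if ia = i then 1 else 0) * v $ ia) = (\<Sum>ia = 0..<N. if i = ia then c * v $ ia else 0)"
      by (intro sum.cong) auto
    also have "\<dots> = c * v $ i" using that by (subst sum.delta') auto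
    finally show ?thesis .
  qed
  then show ?thesis
    by (intro eq_vecI) (use v in \<open>auto simp: scalar_prod_def\<close>)
qed

lemma gen_facts:
  assumes st: "stabilizer_state n g \<psi>" and j: "j < n"
  shows "g j \<in> carrier_mat (2^n) (2^n) \<and> herm_f (2^n) (\<lambda>a b. g j $$ (a, b)) \<and> g j * g j = 1\<^sub>m (2^n)"
proof -
  let ?N = "2^n :: nat"
  have psi: "\<psi> \<in> carrier_vec ?N" and nrm: "\<psi> \<bullet>c \<psi> = 1" and fx: "g j *\<^sub>v \<psi> = \<psi>"
    and ip: "is_pauli n (g j)" using st j unfolding stabilizer_state_def by auto
  from ip obtain ph P where ph: "ph \<in> {1, -1, \<i>, -\<i>}" and gj: "g j = pauli_mat n ph P"
    unfolding is_pauli_def by blast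
  define T where "T = pauli_mat n 1 P"
  have T: "T \<in> carrier_mat ?N ?N" unfolding T_def by (rule pauli_carrier)
  have gT: "g j = ph \<cdot>\<^sub>m T" unfolding gj T_def by (rule pauli_smult)
  have TT: "T * T = 1\<^sub>m ?N" unfolding T_def by (rule pauli_sq)
  have gg: "g j * g j = (ph * ph) \<cdot>\<^sub>m 1\<^sub>m ?N"
  proof -
    have "g j * g j = ph \<cdot>\<^sub>m (T * (ph \<cdot>\<^sub>m T))" unfolding gT
      by (rule mult_smult_assoc_mat[of T ?N ?N "ph \<cdot>\<^sub>m T" ?N ph]) (use T in auto)
    also have "\<dots> = ph \<cdot>\<^sub>m (ph \<cdot>\<^sub>m (T * T))" by (subst mult_smult_distrib[of T ?N ?N T ?N ph]) (use T in auto)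
    also have "\<dots> = (ph * ph) \<cdot>\<^sub>m 1\<^sub>m ?N" unfolding TT by (rule eq_matI) auto
    finally show ?thesis .
  qed
  have gcar: "g j \<in> carrier_mat ?N ?N" unfolding gT using T by simp
  have "(g j * g j) *\<^sub>v \<psi> = \<psi>" using gcar psi fx by simp
  hence "(ph * ph) \<cdot>\<^sub>v \<psi> = \<psi>" unfolding gg using smult_one_mult_vec[OF psi] by simp
  have ph2: "ph * ph = 1"
  proof (rule ccontr)
    assume ne: "ph * ph \<noteq> 1"
    have "\<psi> $ i = 0" if "i < ?N" for i
    proof -
      have "(ph * ph) * \<psi> $ i = \<psi> $ i"
        using \<open>(ph * ph) \<cdot>\<^sub>v \<psi> = \<psi>\<close> that psi by (metis carrier_vecD index_smult_vec(1))
      then show ?thesis using ne by (metis mult_cancel_right2)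
    qed
    hence "\<psi> \<bullet>c \<psi> = 0" using psi by (simp add: scalar_prod_def)
    then show False using nrm by simp
  qed
  hence phr: "ph = 1 \<or> ph = -1" using ph by auto
  have herm: "herm_f ?N (\<lambda>a b. g j $$ (a, b))" unfolding herm_f_def
  proof (intro allI impI)
    fix a b assume a: "a < ?N" and b: "b < ?N"
    have "g j $$ (b, a) = ph * T $$ (b, a)" unfolding gT using T a b by simp
    also have "\<dots> = ph * cnj (T $$ (a, b))" unfolding T_def using pauli_herm[OF a b] by simp
    also have "\<dots> = cnj (ph * T $$ (a, b))" using phr by auto
    also have "ph * T $$ (a, b) = g j $$ (a, b)" unfolding gT using T a b by simp
    finally show "g j $$ (b, a) = cnj (g j $$ (a, b))" .
  qed
  have "(1::complex) \<cdot>\<^sub>m 1\<^sub>m ?N = 1\<^sub>m ?N" by (rule eq_matI) auto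
  then show ?thesis using gcar herm gg ph2 by simp
qed



lemma gen_prod_props:
  assumes st: "stabilizer_state n g \<psi>"
  shows "j \<le> n \<Longrightarrow> gen_prod (2^n) g u j \<in> carrier_mat (2^n) (2^n)
    \<and> herm_f (2^n) (\<lambda>a b. gen_prod (2^n) g u j $$ (a, b))
    \<and> gen_prod (2^n) g u j * gen_prod (2^n) g u j = 1\<^sub>m (2^n)
    \<and> gen_prod (2^n) g u j *\<^sub>v \<psi> = \<psi>
    \<and> (\<forall>k<n. gen_prod (2^n) g u j * g k = g k * gen_prod (2^n) g u j)"
proof (induction j)
  let ?N = "2^n :: nat"
  have psi: "\<psi> \<in> carrier_vec ?N" using st unfolding stabilizer_state_def by auto
  have gk: "g k \<in> carrier_mat ?N ?N" if "k < n" for k using gen_facts[OF st that] by auto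
  {
  case 0
  have h1: "herm_f ?N (\<lambda>a b. (1\<^sub>m ?N :: complex mat) $$ (a, b))" unfolding herm_f_def by auto
  have cm: "\<forall>k<n. 1\<^sub>m ?N * g k = g k * 1\<^sub>m ?N"
  proof (intro allI impI)
    fix k assume k: "k < n"
    show "1\<^sub>m ?N * g k = g k * 1\<^sub>m ?N" using left_mult_one_mat[OF gk[OF k]] right_mult_one_mat[OF gk[OF k]] by simp
  qed
  show ?case using psi h1 cm by auto
  }
next
  let ?N = "2^n :: nat"
  have psi: "\<psi> \<in> carrier_vec ?N" using st unfolding stabilizer_state_def by auto
  have gk: "g k \<in> carrier_mat ?N ?N" if "k < n" for k using gen_facts[OF st that] by auto
  have gkh: "herm_f ?N (\<lambda>a b. g k $$ (a, b))" if "k < n" for k using gen_facts[OF st that] by auto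
  have gkk: "g k * g k = 1\<^sub>m ?N" if "k < n" for k using gen_facts[OF st that] by auto
  have gkpsi: "g k *\<^sub>v \<psi> = \<psi>" if "k < n" for k using st that unfolding stabilizer_state_def by auto
  have gcomm: "g k * g l = g l * g k" if "k < n" "l < n" for k l using st that unfolding stabilizer_state_def by auto
  case (Suc j)
  hence j: "j < n" by simp
  define X where "X = gen_prod ?N g u j"
  define H where "H = (if u $ j = 1 then g j else 1\<^sub>m ?N)"
  have IH: "X \<in> carrier_mat ?N ?N" "herm_f ?N (\<lambda>a b. X $$ (a, b))" "X * X = 1\<^sub>m ?N" "X *\<^sub>v \<psi> = \<psi>"
     "\<forall>k<n. X * g k = g k * X"
    using Suc.IH j unfolding X_def by auto
  have eq: "gen_prod ?N g u (Suc j) = X * H" unfolding X_def H_def by simp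
  have Hc: "H \<in> carrier_mat ?N ?N" unfolding H_def using gk[OF j] by auto
  have h1: "herm_f ?N (\<lambda>a b. (1\<^sub>m ?N :: complex mat) $$ (a, b))" unfolding herm_f_def by auto
  have Hh: "herm_f ?N (\<lambda>a b. H $$ (a, b))"
  proof (cases "u $ j = 1")
    case True then show ?thesis unfolding H_def using gkh[OF j] by simp
  next
    case False then show ?thesis unfolding H_def using h1 by simp
  qed
  have HH: "H * H = 1\<^sub>m ?N" unfolding H_def using gkk[OF j] by auto
  have Hpsi: "H *\<^sub>v \<psi> = \<psi>" unfolding H_def using gkpsi[OF j] psi by auto
  have Hk: "\<forall>k<n. H * g k = g k * H"
  proof (intro allI impI)
    fix k assume k: "k < n"
    show "H * g k = g k * H" unfolding H_def
      using gcomm[OF j k] left_mult_one_mat[OF gk[OF k]] right_mult_one_mat[OF gk[OF k]] by simp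
  qed
  have XH: "X * H = H * X" unfolding H_def using IH(1,5) j by auto
  have c1: "X * H \<in> carrier_mat ?N ?N" using IH(1) Hc by simp
  have c2: "herm_f ?N (\<lambda>a b. (X * H) $$ (a, b))" by (rule herm_mult[OF IH(1) Hc IH(2) Hh XH])
  have c3: "(X * H) * (X * H) = 1\<^sub>m ?N"
  proof -
    have "(X * H) * (X * H) = X * (H * (X * H))" using IH(1) Hc by (simp add: assoc_mult_mat[of X ?N ?N H ?N "X * H" ?N])
    also have "H * (X * H) = (H * X) * H" using IH(1) Hc by (simp add: assoc_mult_mat[of H ?N ?N X ?N H ?N])
    also have "\<dots> = (X * H) * H" using XH by simp
    also have "\<dots> = X * (H * H)" using IH(1) Hc by (simp add: assoc_mult_mat[of X ?N ?N H ?N H ?N])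
    also have "\<dots> = X" using HH IH(1) by simp
    finally show ?thesis using IH(3) by simp
  qed
  have c4: "(X * H) *\<^sub>v \<psi> = \<psi>" using IH(1,4) Hc psi Hpsi by simp
  have c5: "\<forall>k<n. (X * H) * g k = g k * (X * H)"
  proof (intro allI impI)
    fix k assume k: "k < n"
    have "(X * H) * g k = X * (H * g k)" using IH(1) Hc gk[OF k] by simp
    also have "\<dots> = X * (g k * H)" using Hk k by simp
    also have "\<dots> = (X * g k) * H" using IH(1) Hc gk[OF k] by simp
    also have "\<dots> = (g k * X) * H" using IH(5) k by simp
    also have "\<dots> = g k * (X * H)" using IH(1) Hc gk[OF k] by simp
    finally show "(X * H) * g k = g k * (X * H)" .
  qed
  show ?case unfolding eq using c1 c2 c3 c4 c5 by blast
qed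

lemma qbound:
  assumes st: "stabilizer_state n g \<psi>" and dm: "density_matrix n \<rho>"
  shows "fidelity \<rho> \<psi> \<le> plus_prob n \<rho> (g_of n g u) \<and> plus_prob n \<rho> (g_of n g u) \<le> 1"
proof -
  let ?N = "2^n :: nat"
  define G where "G = g_of n g u"
  have GP: "G \<in> carrier_mat ?N ?N" "herm_f ?N (\<lambda>a b. G $$ (a, b))" "G * G = 1\<^sub>m ?N" "G *\<^sub>v \<psi> = \<psi>"
    using gen_prod_props[OF st, of n u] unfolding G_def g_of_def by auto
  have psi: "\<psi> \<in> carrier_vec ?N" and nrm0: "\<psi> \<bullet>c \<psi> = 1" using st unfolding stabilizer_state_def by auto
  have rho: "\<rho> \<in> carrier_mat ?N ?N" and tr0: "mtrace \<rho> = 1"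
    and psd: "\<forall>v \<in> carrier_vec ?N. 0 \<le> (\<rho> *\<^sub>v v) \<bullet>c v"
    using dm unfolding density_matrix_def by auto
  have tr: "(\<Sum>k<?N. \<rho> $$ (k, k)) = 1" using tr0 rho unfolding mtrace_def by simp
  have sq: "\<forall>a<?N. \<forall>b<?N. (\<Sum>c<?N. G $$ (a, c) * G $$ (c, b)) = of_bool (a = b)"
  proof (intro allI impI)
    fix a b assume a: "a < ?N" and b: "b < ?N"
    have "(\<Sum>c<?N. G $$ (a, c) * G $$ (c, b)) = (G * G) $$ (a, b)"
      using mult_entry_sum[OF GP(1) GP(1) a b] by simp
    also have "\<dots> = of_bool (a = b)" using GP(3) a b by simp
    finally show "(\<Sum>c<?N. G $$ (a, c) * G $$ (c, b)) = of_bool (a = b)" .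
  qed
  have fx: "\<forall>a<?N. (\<Sum>c<?N. G $$ (a, c) * \<psi> $ c) = \<psi> $ a"
  proof (intro allI impI)
    fix a assume a: "a < ?N"
    have "(\<Sum>c<?N. G $$ (a, c) * \<psi> $ c) = (G *\<^sub>v \<psi>) $ a"
      using GP(1) psi a by (simp add: scalar_prod_def atLeast0LessThan)
    then show "(\<Sum>c<?N. G $$ (a, c) * \<psi> $ c) = \<psi> $ a" using GP(4) by simp
  qed
  have nrm: "(\<Sum>c<?N. \<psi> $ c * cnj (\<psi> $ c)) = 1"
    using nrm0 psi by (simp add: scalar_prod_def atLeast0LessThan)
  have FB: "Re (\<Sum>k<?N. \<Sum>a<?N. \<rho> $$ (k, a) * (\<psi> $ a * cnj (\<psi> $ k)))
        \<le> Re (\<Sum>k<?N. \<Sum>a<?N. \<rho> $$ (k, a) * ((of_bool (a = k) + G $$ (a, k)) / 2))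
     \<and> Re (\<Sum>k<?N. \<Sum>a<?N. \<rho> $$ (k, a) * ((of_bool (a = k) + G $$ (a, k)) / 2)) \<le> 1"
    using fid_bound[OF rho psd tr GP(2) sq, of "\<lambda>c. \<psi> $ c"] fx nrm by simp
  have E1: "fidelity \<rho> \<psi> = Re (\<Sum>k<?N. \<Sum>a<?N. \<rho> $$ (k, a) * (\<psi> $ a * cnj (\<psi> $ k)))"
  proof -
    have "(\<rho> *\<^sub>v \<psi>) \<bullet>c \<psi> = (\<Sum>k<?N. (\<Sum>a<?N. \<rho> $$ (k, a) * \<psi> $ a) * cnj (\<psi> $ k))"
      using rho psi by (simp add: scalar_prod_def atLeast0LessThan)
    also have "\<dots> = (\<Sum>k<?N. \<Sum>a<?N. \<rho> $$ (k, a) * (\<psi> $ a * cnj (\<psi> $ k)))"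
      by (simp only: sum_distrib_right mult.assoc)
    finally show ?thesis unfolding fidelity_def by simp
  qed
  have E2: "plus_prob n \<rho> G = Re (\<Sum>k<?N. \<Sum>a<?N. \<rho> $$ (k, a) * ((of_bool (a = k) + G $$ (a, k)) / 2))"
  proof -
    define M where "M = (1/2 :: complex) \<cdot>\<^sub>m (1\<^sub>m ?N + G)"
    have Mc: "M \<in> carrier_mat ?N ?N" unfolding M_def using GP(1) by simp
    have Me: "M $$ (a, k) = (of_bool (a = k) + G $$ (a, k)) / 2" if "a < ?N" "k < ?N" for a k
      unfolding M_def using GP(1) that by simp
    have "mtrace (\<rho> * M) = (\<Sum>k<?N. (\<rho> * M) $$ (k, k))" unfolding mtrace_def using rho by simp
    also have "\<dots> = (\<Sum>k<?N. \<Sum>a<?N. \<rho> $$ (k, a) * M $$ (a, k))"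
      by (intro sum.cong refl) (simp add: mult_entry_sum[OF rho Mc])
    also have "\<dots> = (\<Sum>k<?N. \<Sum>a<?N. \<rho> $$ (k, a) * ((of_bool (a = k) + G $$ (a, k)) / 2))"
      by (intro sum.cong refl) (simp add: Me)
    finally show ?thesis unfolding plus_prob_def M_def by simp
  qed
  have "fidelity \<rho> \<psi> \<le> plus_prob n \<rho> G \<and> plus_prob n \<rho> G \<le> 1"
    unfolding E1 E2 using FB by blast
  then show ?thesis unfolding G_def .
qed



lemma card_row:
  fixes Y :: "nat \<times> nat \<Rightarrow> bool"
  shows "(\<Sum>j<k. of_bool (Y (i, j)) :: real) = real (card {x \<in> {(i', j). i' = i \<and> j < k}. Y x})"
proof -
  have "{x \<in> {(i', j). i' = i \<and> j < k}. Y x} = (\<lambda>j. (i, j)) ` {j \<in> {..<k}. Y (i, j)}" by auto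
  hence "card {x \<in> {(i', j). i' = i \<and> j < k}. Y x} = card {j \<in> {..<k}. Y (i, j)}"
    by (simp add: card_image inj_on_def)
  moreover have "(\<Sum>j<k. of_bool (Y (i, j)) :: real) = real (card {j \<in> {..<k}. Y (i, j)})"
  proof -
    have "{..<k} \<inter> {j. Y (i, j)} = {j \<in> {..<k}. Y (i, j)}" by auto
    then show ?thesis by simp
  qed
  ultimately show ?thesis by simp
qed

lemma row_binomial:
  fixes m :: "nat \<Rightarrow> nat" and n i :: nat and p :: "nat \<Rightarrow> real"
  assumes i: "i < n" and p: "p i \<in> {0..1}"
  shows "map_pmf (\<lambda>Y. card {x \<in> {(i', j). i' = i \<and> j < m i}. Y x})
           (Pi_pmf {(i, j). i < n \<and> j < m i} False (\<lambda>(i, j). bernoulli_pmf (p i)))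
         = binomial_pmf (m i) (p i)"
proof -
  let ?S = "{(i, j). i < n \<and> j < m i}"
  let ?A = "{(i', j). i' = i \<and> j < m i}"
  have finS: "finite ?S"
  proof -
    have "?S \<subseteq> {..<n} \<times> {..<Max (m ` {..<n})+1}"
    proof
      fix x assume "x \<in> ?S"
      then obtain a b where x: "x = (a, b)" "a < n" "b < m a" by auto
      have "m a \<in> m ` {..<n}" using x by auto
      hence "m a \<le> Max (m ` {..<n})" using Max_ge[of "m ` {..<n}" "m a"] by simp
      hence "b < Max (m ` {..<n}) + 1" using x(3) by linarith
      then show "x \<in> {..<n} \<times> {..<Max (m ` {..<n})+1}" using x(1,2) by simp
    qed
    then show ?thesis by (rule finite_subset) auto
  qed
  have AS: "?A \<subseteq> ?S" using i by auto
  have finA: "finite ?A"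
  proof -
    have "?A = (\<lambda>j. (i, j)) ` {..<m i}" by auto
    then show ?thesis by simp
  qed
  have cardA: "card ?A = m i"
  proof -
    have "?A = (\<lambda>j. (i, j)) ` {..<m i}" by auto
    then show ?thesis by (simp add: card_image inj_on_def)
  qed
  have "binomial_pmf (m i) (p i) = map_pmf (\<lambda>f. card {x \<in> ?A. f x}) (Pi_pmf ?A False (\<lambda>_. bernoulli_pmf (p i)))"
    by (rule binomial_pmf_altdef'[OF finA cardA p])
  also have "Pi_pmf ?A False (\<lambda>_. bernoulli_pmf (p i)) = Pi_pmf ?A False (\<lambda>(i, j). bernoulli_pmf (p i))"
    by (intro Pi_pmf_cong) auto
  also have "\<dots> = map_pmf (\<lambda>f x. if x \<in> ?A then f x else False) (Pi_pmf ?S False (\<lambda>(i, j). bernoulli_pmf (p i)))"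
    by (rule Pi_pmf_subset[OF finS AS])
  also have "map_pmf (\<lambda>f. card {x \<in> ?A. f x}) \<dots> = map_pmf (\<lambda>Y. card {x \<in> ?A. Y x}) (Pi_pmf ?S False (\<lambda>(i, j). bernoulli_pmf (p i)))"
    unfolding map_pmf_comp by (intro map_pmf_cong refl arg_cong[where f=card]) auto
  finally show ?thesis by simp
qed

lemma row_tail:
  fixes m :: "nat \<Rightarrow> nat" and n i :: nat and p :: "nat \<Rightarrow> real"
  assumes i: "i < n" and p: "p i \<in> {0..1}" and mi: "m i > 0" and e: "\<epsilon> \<ge> 0"
  shows "measure_pmf.prob (Pi_pmf {(i, j). i < n \<and> j < m i} False (\<lambda>(i, j). bernoulli_pmf (p i)))
           {Y. (\<Sum>j<m i. of_bool (Y (i, j))) / real (m i) \<le> p i - \<epsilon>} \<le> exp (-2 * real (m i) * \<epsilon>^2)"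
proof -
  let ?\<Omega> = "Pi_pmf {(i, j). i < n \<and> j < m i} False (\<lambda>(i, j). bernoulli_pmf (p i))"
  let ?f = "\<lambda>Y. card {x \<in> {(i', j). i' = i \<and> j < m i}. Y x}"
  have "{Y. (\<Sum>j<m i. of_bool (Y (i, j))) / real (m i) \<le> p i - \<epsilon>} = ?f -` {x. real x / real (m i) \<le> p i - \<epsilon>}"
    by (auto simp: card_row)
  hence "measure_pmf.prob ?\<Omega> {Y. (\<Sum>j<m i. of_bool (Y (i, j))) / real (m i) \<le> p i - \<epsilon>}
      = measure_pmf.prob (map_pmf ?f ?\<Omega>) {x. real x / real (m i) \<le> p i - \<epsilon>}" by simp
  also have "\<dots> = measure_pmf.prob (binomial_pmf (m i) (p i)) {x. real x / real (m i) \<le> p i - \<epsilon>}"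
    using row_binomial[where m=m and n=n and i=i and p=p, OF i p] by simp
  also have "\<dots> \<le> exp (-2 * real (m i) * \<epsilon>^2)"
    using binomial_distribution.prob_le'[of "p i" "m i" \<epsilon>] p mi e unfolding binomial_distribution_def by simp
  finally show ?thesis .
qed



theorem corollary1:
  fixes n :: nat and A :: "bit mat" and g :: "nat \<Rightarrow> complex mat" and \<psi> :: "complex vec"
    and \<rho> :: "complex mat" and \<epsilon> \<delta> :: real and m :: "nat \<Rightarrow> nat"
  assumes "n \<ge> 1"
    and "A \<in> carrier_mat n n" and "invertible_mat A"
    and "stabilizer_state n g \<psi>"
    and "density_matrix n \<rho>"
    and "\<epsilon> > 0" and "0 < \<delta>" and "\<delta> < 1"
    and "\<forall>i<n. int (m i) \<ge> \<lceil>ln (2 * real n / \<delta>) / (2 * \<epsilon>^2)\<rceil>"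
  shows "measure_pmf.prob (outcomes n A g \<rho> m) {Y. fidelity \<rho> \<psi> \<le> U_hat n m Y + \<epsilon>} \<ge> 1 - \<delta>
    \<and> ((\<forall>i<n. int (m i) = \<lceil>ln (2 * real n / \<delta>) / (2 * \<epsilon>^2)\<rceil>)
          \<longrightarrow> (\<Sum>i<n. m i) = n * nat \<lceil>ln (2 * real n / \<delta>) / (2 * \<epsilon>^2)\<rceil>)"
proof -
  note n1 = assms(1) and st = assms(4) and dm = assms(5) and e = assms(6) and d0 = assms(7) and d1 = assms(8)
    and mge = assms(9)
  define L where "L = ln (2 * real n / \<delta>) / (2 * \<epsilon>^2)"
  define p where "p i = plus_prob n \<rho> (g_of n g (col A i))" for i
  define F where "F = fidelity \<rho> \<psi>"
  define \<Omega> where "\<Omega> = outcomes n A g \<rho> m"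
  have \<Omega>eq: "\<Omega> = Pi_pmf {(i, j). i < n \<and> j < m i} False (\<lambda>(i, j). bernoulli_pmf (p i))"
    unfolding \<Omega>_def outcomes_def p_def by simp
  have qb: "F \<le> p i \<and> p i \<le> 1" for i unfolding F_def p_def by (rule qbound[OF st dm])
  have F0: "0 \<le> F"
  proof -
    have "\<psi> \<in> carrier_vec (2^n)" using st unfolding stabilizer_state_def by auto
    hence "0 \<le> (\<rho> *\<^sub>v \<psi>) \<bullet>c \<psi>" using dm unfolding density_matrix_def by auto
    thus ?thesis unfolding F_def fidelity_def by (simp add: less_eq_complex_def)
  qed
  have p01: "p i \<in> {0..1}" for i using qb[of i] F0 by auto
  have arg: "2 * real n / \<delta> > 1"
  proof -
    have "2 * real n \<ge> 2" using n1 by simp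
    moreover have "2 > \<delta>" using d1 by simp
    ultimately have "2 * real n > \<delta>" by linarith
    thus ?thesis using d0 by simp
  qed
  have Lpos: "L > 0" unfolding L_def using arg e by (intro divide_pos_pos) auto
  have mL: "real (m i) \<ge> L" if "i < n" for i
  proof -
    have "L \<le> real_of_int \<lceil>L\<rceil>" by (rule le_of_int_ceiling)
    also have "\<dots> \<le> real_of_int (int (m i))" using mge that unfolding L_def by (simp only: of_int_le_iff)
    finally show ?thesis by simp
  qed
  have mpos: "m i > 0" if "i < n" for i using mL[OF that] Lpos by (cases "m i") auto
  have expb: "exp (-2 * real (m i) * \<epsilon>^2) \<le> \<delta> / (2 * real n)" if "i < n" for i
  proof -
    have "-2 * real (m i) * \<epsilon>^2 \<le> -2 * L * \<epsilon>^2" using mL[OF that] e by (simp add: mult_le_cancel_right)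
    hence "exp (-2 * real (m i) * \<epsilon>^2) \<le> exp (-2 * L * \<epsilon>^2)" by simp
    also have "-2 * L * \<epsilon>^2 = - ln (2 * real n / \<delta>)" unfolding L_def using e by (simp add: field_simps)
    also have "exp (- ln (2 * real n / \<delta>)) = \<delta> / (2 * real n)"
      using arg by (simp add: exp_minus)
    finally show ?thesis .
  qed
  define bad where "bad i = {Y. a_hat m Y i \<le> p i - \<epsilon>}" for i
  have pbad: "measure_pmf.prob \<Omega> (bad i) \<le> \<delta> / (2 * real n)" if "i < n" for i
  proof -
    have "measure_pmf.prob \<Omega> (bad i) \<le> exp (-2 * real (m i) * \<epsilon>^2)"
      unfolding \<Omega>eq bad_def a_hat_def using row_tail[where m=m and n=n and i=i and p=p and \<epsilon>=\<epsilon>, OF that p01 mpos[OF that]] e by simp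
    also have "\<dots> \<le> \<delta> / (2 * real n)" by (rule expb[OF that])
    finally show ?thesis .
  qed
  define good where "good = {Y. F \<le> U_hat n m Y + \<epsilon>}"
  have sub: "UNIV - good \<subseteq> (\<Union>i\<in>{..<n}. bad i)"
  proof
    fix Y assume Y: "Y \<in> UNIV - good"
    show "Y \<in> (\<Union>i\<in>{..<n}. bad i)"
    proof (rule ccontr)
      assume nb: "Y \<notin> (\<Union>i\<in>{..<n}. bad i)"
      have gt: "a_hat m Y i > p i - \<epsilon>" if "i < n" for i
      proof -
        have "\<not> a_hat m Y i \<le> p i - \<epsilon>" using nb that unfolding bad_def by auto
        thus ?thesis by linarith
      qed
      have "0 \<in> {..<n}" using n1 by simp
      hence ne: "a_hat m Y ` {..<n} \<noteq> {}" by blast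
      have "U_hat n m Y \<in> a_hat m Y ` {..<n}" unfolding U_hat_def by (rule Min_in) (use ne in auto)
      then obtain i where i: "i < n" and U: "U_hat n m Y = a_hat m Y i" by auto
      have "F \<le> U_hat n m Y + \<epsilon>" using gt[OF i] qb[of i] U by linarith
      thus False using Y unfolding good_def by auto
    qed
  qed
  have "measure_pmf.prob \<Omega> (UNIV - good) \<le> measure_pmf.prob \<Omega> (\<Union>i\<in>{..<n}. bad i)"
    using sub by (intro measure_pmf.finite_measure_mono) auto
  also have "\<dots> \<le> (\<Sum>i<n. measure_pmf.prob \<Omega> (bad i))"
    by (intro measure_pmf.finite_measure_subadditive_finite) auto
  also have "\<dots> \<le> (\<Sum>i<n. \<delta> / (2 * real n))" by (intro sum_mono pbad) auto
  also have "\<dots> = \<delta> / 2" using n1 by simp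
  finally have cb: "measure_pmf.prob \<Omega> (UNIV - good) \<le> \<delta> / 2" .
  have "measure_pmf.prob \<Omega> good = 1 - measure_pmf.prob \<Omega> (UNIV - good)"
    using measure_pmf.prob_compl[of "UNIV - good" \<Omega>] by (simp add: Diff_Diff_Int)
  hence P1: "measure_pmf.prob \<Omega> good \<ge> 1 - \<delta>" using cb d0 by linarith
  have P2: "(\<forall>i<n. int (m i) = \<lceil>ln (2 * real n / \<delta>) / (2 * \<epsilon>^2)\<rceil>)
          \<longrightarrow> (\<Sum>i<n. m i) = n * nat \<lceil>ln (2 * real n / \<delta>) / (2 * \<epsilon>^2)\<rceil>"
  proof
    assume h: "\<forall>i<n. int (m i) = \<lceil>ln (2 * real n / \<delta>) / (2 * \<epsilon>^2)\<rceil>"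
    have "(\<Sum>i<n. m i) = (\<Sum>i<n. nat \<lceil>ln (2 * real n / \<delta>) / (2 * \<epsilon>^2)\<rceil>)"
      by (intro sum.cong refl) (use h in \<open>metis lessThan_iff nat_int\<close>)
    then show "(\<Sum>i<n. m i) = n * nat \<lceil>ln (2 * real n / \<delta>) / (2 * \<epsilon>^2)\<rceil>" by simp
  qed
  show ?thesis using P1 P2 unfolding \<Omega>_def good_def F_def by blast
qed

end
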